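(* Let $(N_1(t))_{t\ge 0}$ be a standard Poisson process with rate $1$, let $\lambda:[0,\infty)\to(0,\infty)$ be locally integrable, $\Lambda(t)=\int_0^t\lambda(\tau)\,d\tau$ with $\Lambda(t)\to\infty$ as $t\to\infty$. Let $\alpha\in(0,1)$, let $L_\alpha$ be an $\alpha$-stable subordinator ($\mathbb{E}[e^{-uL_\alpha(t)}]=e^{-tu^\alpha}$) and $Y_\alpha(t)=\inf\{u\ge0:L_\alpha(u)>t\}$, independent of $N_1$. Let $N(t)=N_1(\Lambda(t))$ and $N_\alpha(t)=N(Y_\alpha(t))$, adapted to the filtration $\mathcal{F}_t=\sigma(\{Y_\alpha(s),s\ge0\})\vee\sigma(\{N_\alpha(s):s\le t\})$, with $\mathcal{F}_0=\sigma(\{Y_\alpha(s),s\ge0\})$. Then $$\frac{N(Y_\alpha(T))-\Lambda(Y_\alpha(T))}{\sqrt{\Lambda(Y_\alpha(T))}}\longrightarrow W\sim N(0,1)\qquad \mathcal{F}_0\text{-stably as }T\to\infty.$$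
   Context: If $X_n, X$ are real random variables on $(\Omega,\mathcal{E},\mathbb{P})$ and $\mathcal{F}\subseteq\mathcal{E}$ is a sub-$\sigma$-algebra, $X_n\to X$ $\mathcal{F}$-stably (in distribution) means: for all $B\in\mathcal{F}$ and all Borel $A\subseteq\mathbb{R}$ with $\mathbb{P}(X\in\partial A)=0$, $\mathbb{P}(\{X_n\in A\}\cap B)\to\mathbb{P}(\{X\in A\}\cap B)$. (The same definition applies along a continuous parameter $T\to\infty$.) *)

theory Defs
  imports "HOL-Probability.Probability"
begin

definition std_normal_measure :: "real measure" where
  "std_normal_measure = density lborel std_normal_density"

definition indep_increments :: "'a measure \<Rightarrow> (real \<Rightarrow> 'a \<Rightarrow> real) \<Rightarrow> bool" where
  "indep_increments M X \<longleftrightarrow>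
     (\<forall>ts::real list. sorted ts \<and> ts \<noteq> [] \<and> 0 \<le> hd ts \<longrightarrow>
        prob_space.indep_vars M (\<lambda>_. borel) (\<lambda>i \<omega>. X (ts ! Suc i) \<omega> - X (ts ! i) \<omega>)
          {..<length ts - 1})"

definition std_poisson_process :: "'a measure \<Rightarrow> (real \<Rightarrow> 'a \<Rightarrow> nat) \<Rightarrow> bool" where
  "std_poisson_process M N \<longleftrightarrow>
     (\<forall>t. N t \<in> measurable M (count_space UNIV)) \<and>
     (\<forall>\<omega>\<in>space M. N 0 \<omega> = 0 \<and> mono_on {0..} (\<lambda>t. N t \<omega>) \<and>
        (\<forall>t\<ge>0. continuous (at_right t) (\<lambda>s. real (N s \<omega>)))) \<and>
     indep_increments M (\<lambda>t \<omega>. real (N t \<omega>)) \<and>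
     (\<forall>s t. 0 \<le> s \<and> s < t \<longrightarrow>
        distr M (count_space UNIV) (\<lambda>\<omega>. N t \<omega> - N s \<omega>) = measure_pmf (poisson_pmf (t - s)))"

definition stable_subordinator :: "'a measure \<Rightarrow> real \<Rightarrow> (real \<Rightarrow> 'a \<Rightarrow> real) \<Rightarrow> bool" where
  "stable_subordinator M \<alpha> L \<longleftrightarrow>
     (\<forall>t. L t \<in> borel_measurable M) \<and>
     (\<forall>\<omega>\<in>space M. L 0 \<omega> = 0 \<and> mono_on {0..} (\<lambda>t. L t \<omega>) \<and>
        (\<forall>t\<ge>0. continuous (at_right t) (\<lambda>s. L s \<omega>))) \<and>
     indep_increments M L \<and>
     (\<forall>s t u. 0 \<le> s \<and> s \<le> t \<and> 0 \<le> u \<longrightarrow>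
        prob_space.expectation M (\<lambda>\<omega>. exp (- u * (L t \<omega> - L s \<omega>))) = exp (- (t - s) * u powr \<alpha>))"

definition inverse_subordinator :: "(real \<Rightarrow> 'a \<Rightarrow> real) \<Rightarrow> real \<Rightarrow> 'a \<Rightarrow> real" where
  "inverse_subordinator L t \<omega> = Inf {u. 0 \<le> u \<and> L u \<omega> > t}"

definition gen_sigma :: "'a measure \<Rightarrow> (real \<Rightarrow> 'a \<Rightarrow> real) \<Rightarrow> 'a set set" where
  "gen_sigma M Y = sigma_sets (space M)
     (\<Union>s\<in>{0..}. {Y s -` A \<inter> space M | A. A \<in> sets borel})"

end

theory Submission
  imports Defs
begin


lemma poisson_char:
  fixes m t :: real assumes m: "m > 0"
  shows "char (distr (measure_pmf (poisson_pmf m)) borel (\<lambda>k. (real k - m) / sqrt m)) t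
        = exp (complex_of_real m * (iexp (t / sqrt m) - 1) - \<i> * complex_of_real (t * sqrt m))"
proof -
  define s where "s = t / sqrt m"
  define c where "c = exp (- complex_of_real m) * iexp (- t * sqrt m)"
  have eq: "pmf (poisson_pmf m) k *\<^sub>R iexp (t * ((real k - m) / sqrt m))
        = c * ((complex_of_real m * iexp s) ^ k /\<^sub>R fact k)" for k
  proof -
    have "t * ((real k - m) / sqrt m) = real k * s + (- t * sqrt m)"
      using m by (simp add: s_def field_simps real_sqrt_mult[symmetric])
    moreover have "iexp s ^ k * iexp (- t * sqrt m) = iexp (real k * s + (- t * sqrt m))"
      by (simp add: exp_of_nat_mult[symmetric] exp_add[symmetric] algebra_simps)
    ultimately have "iexp (t * ((real k - m) / sqrt m)) = iexp s ^ k * iexp (- t * sqrt m)"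
      by simp
    then show ?thesis using m
      by (simp add: c_def scaleR_conv_of_real power_mult_distrib exp_of_real[symmetric] field_simps)
  qed
  have "char (distr (measure_pmf (poisson_pmf m)) borel (\<lambda>k. (real k - m) / sqrt m)) t
      = (\<integral>k. iexp (t * ((real k - m) / sqrt m)) \<partial>measure_pmf (poisson_pmf m))"
    unfolding char_def by (subst integral_distr) auto
  also have "\<dots> = (\<integral>k. pmf (poisson_pmf m) k *\<^sub>R iexp (t * ((real k - m) / sqrt m)) \<partial>count_space UNIV)"
    by (simp add: measure_pmf_eq_density integral_density)
  also have "\<dots> = (\<integral>k. c * ((complex_of_real m * iexp s) ^ k /\<^sub>R fact k) \<partial>count_space UNIV)"
    by (rule Bochner_Integration.integral_cong[OF refl eq])
  also have "\<dots> = c * exp (complex_of_real m * iexp s)"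
  proof -
    have su: "(\<lambda>k. c * ((complex_of_real m * iexp s) ^ k /\<^sub>R fact k)) sums (c * exp (complex_of_real m * iexp s))"
      by (intro sums_mult exp_converges)
    have "integrable (count_space UNIV) (\<lambda>k::nat. c * ((complex_of_real m * iexp s) ^ k /\<^sub>R fact k))"
      unfolding integrable_count_space_nat_iff
    proof -
      have "summable (\<lambda>k. norm c * (norm (complex_of_real m * iexp s) ^ k /\<^sub>R fact k))"
        by (intro summable_mult exp_converges[THEN sums_summable])
      moreover have "norm (c * ((complex_of_real m * iexp s) ^ k /\<^sub>R fact k)) = norm c * (norm (complex_of_real m * iexp s) ^ k /\<^sub>R fact k)" for k
        by (simp add: norm_mult norm_power)
      ultimately show "summable (\<lambda>k. norm (c * ((complex_of_real m * iexp s) ^ k /\<^sub>R fact k)))"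
        by (simp only:)
    qed
    then show ?thesis using su by (simp add: integral_count_space_nat sums_iff)
  qed
  also have "\<dots> = exp (complex_of_real m * (iexp s - 1) - \<i> * complex_of_real (t * sqrt m))"
    by (simp add: c_def exp_add[symmetric] exp_diff algebra_simps)
  finally show ?thesis by (simp add: s_def)
qed

lemma exponent_limit:
  fixes t :: real
  shows "((\<lambda>m::real. complex_of_real m * (iexp (t / sqrt m) - 1) - \<i> * complex_of_real (t * sqrt m))
          \<longlongrightarrow> complex_of_real (- (t^2) / 2)) at_top"
proof -
  let ?E = "\<lambda>m::real. complex_of_real m * (iexp (t / sqrt m) - 1) - \<i> * complex_of_real (t * sqrt m)"
  have bound: "norm (?E m - complex_of_real (- (t^2) / 2)) \<le> \<bar>t\<bar>^3 / 6 / sqrt m" if m: "m > 0" for m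
  proof -
    define s where "s = t / sqrt m"
    have ms: "m * s = t * sqrt m" "m * s^2 = t^2"
    proof -
      have sq: "sqrt m * sqrt m = m" "sqrt m > 0" using m by simp_all
      show "m * s = t * sqrt m" unfolding s_def using sq
        by (metis nonzero_mult_div_cancel_left order_less_irrefl times_divide_eq_right mult.commute)
      show "m * s^2 = t^2" unfolding s_def using sq
        by (simp add: power2_eq_square)
    qed
    have sum2: "(\<Sum>k\<le>2. (\<i> * complex_of_real s)^k / fact k) = 1 + \<i> * complex_of_real s - complex_of_real (s^2) / 2"
      by (simp add: eval_nat_numeral power2_eq_square algebra_simps)
    have "complex_of_real m * (iexp s - (\<Sum>k\<le>2. (\<i> * s)^k / fact k))
        = complex_of_real m * iexp s - complex_of_real m - \<i> * complex_of_real (m * s) + complex_of_real (m * s^2) / 2"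
      unfolding sum2 by (simp add: algebra_simps)
    also have "\<dots> = ?E m - complex_of_real (- (t^2) / 2)"
      unfolding ms by (simp add: algebra_simps flip: s_def)
    finally have "?E m - complex_of_real (- (t^2) / 2)
        = complex_of_real m * (iexp s - (\<Sum>k\<le>2. (\<i> * s)^k / fact k))" by simp
    then have "norm (?E m - complex_of_real (- (t^2) / 2)) = m * norm (iexp s - (\<Sum>k\<le>2. (\<i> * s)^k / fact k))"
      using m by (simp add: norm_mult)
    also have "\<dots> \<le> m * (\<bar>s\<bar>^3 / 6)"
      using iexp_approx1[of s 2] m by (intro mult_left_mono) (auto simp: eval_nat_numeral)
    also have "m * (\<bar>s\<bar>^3 / 6) = \<bar>t\<bar>^3 / 6 / sqrt m"
    proof -
      have sq: "sqrt m * sqrt m = m" "sqrt m > 0" using m by simp_all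
      have "\<bar>s\<bar>^3 = \<bar>t\<bar>^3 / (sqrt m * sqrt m * sqrt m)"
        unfolding s_def using sq by (simp add: abs_div power_divide eval_nat_numeral)
      then show ?thesis using sq by simp
    qed
    finally show ?thesis .
  qed
  have lim0: "((\<lambda>m::real. \<bar>t\<bar>^3 / 6 / sqrt m) \<longlongrightarrow> 0) at_top"
    by (rule tendsto_divide_0[OF tendsto_const filterlim_mono[OF sqrt_at_top at_top_le_at_infinity order_refl]])
  have ev: "\<forall>\<^sub>F m in at_top. norm (?E m - complex_of_real (- (t^2) / 2)) \<le> \<bar>t\<bar>^3 / 6 / sqrt m"
    using eventually_gt_at_top[of 0] by eventually_elim (rule bound)
  have "((\<lambda>m. ?E m - complex_of_real (- (t^2) / 2)) \<longlongrightarrow> 0) at_top"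
    by (rule Lim_null_comparison[OF ev lim0])
  then show ?thesis by (rule LIM_zero_cancel)
qed


lemma poisson_clt:
  assumes A: "A \<in> sets borel" and fr: "measure std_normal_measure (frontier A) = 0"
  shows "((\<lambda>m. measure (distr (measure_pmf (poisson_pmf m)) borel (\<lambda>k. (real k - m) / sqrt m)) A)
           \<longlongrightarrow> measure std_normal_measure A) at_top"
proof (rule tendsto_at_topI_sequentially)
  fix X :: "nat \<Rightarrow> real" assume X: "filterlim X at_top sequentially"
  define \<mu> where "\<mu> n = distr (measure_pmf (poisson_pmf (X n))) borel (\<lambda>k. (real k - X n) / sqrt (X n))" for n
  have rd: "real_distribution (\<mu> n)" for n
    unfolding \<mu>_def by (rule prob_space.real_distribution_distr) (auto simp: measure_pmf.prob_space_axioms)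
  have rdN: "real_distribution std_normal_measure"
    unfolding std_normal_measure_def by (rule real_dist_normal_dist)
  have wc: "weak_conv_m \<mu> std_normal_measure"
  proof (rule levy_continuity[OF rd rdN])
    fix t :: real
    have lim: "(\<lambda>n. exp (complex_of_real (X n) * (iexp (t / sqrt (X n)) - 1) - \<i> * complex_of_real (t * sqrt (X n))))
        \<longlonglongrightarrow> exp (complex_of_real (- (t^2) / 2))"
      by (intro tendsto_exp filterlim_compose[OF exponent_limit X])
    have ev: "\<forall>\<^sub>F n in sequentially. exp (complex_of_real (X n) * (iexp (t / sqrt (X n)) - 1) - \<i> * complex_of_real (t * sqrt (X n))) = char (\<mu> n) t"
      using filterlim_at_top_dense[THEN iffD1, OF X, rule_format, of 0]
      by eventually_elim (simp add: \<mu>_def poisson_char)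
    have "char std_normal_measure t = exp (complex_of_real (- (t^2) / 2))"
      unfolding std_normal_measure_def char_std_normal_distribution by (simp only: exp_of_real)
    then show "(\<lambda>n. char (\<mu> n) t) \<longlonglongrightarrow> char std_normal_measure t"
      using Lim_transform_eventually[OF lim ev] by simp
  qed
  have "emeasure std_normal_measure (frontier A) = 0"
    using fr
    using rdN by (metis real_distribution_def prob_space_def finite_measure.emeasure_eq_measure ennreal_0)
  from weak_conv_imp_continuity_set_conv[OF rd rdN wc A this]
  show "(\<lambda>n. measure (distr (measure_pmf (poisson_pmf (X n))) borel (\<lambda>k. (real k - X n) / sqrt (X n))) A)
           \<longlonglongrightarrow> measure std_normal_measure A"
    by (simp add: \<mu>_def)
qed


lemma Lam_mono:
  fixes lam :: "real \<Rightarrow> real"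
  assumes pos: "\<And>t. t \<ge> 0 \<Longrightarrow> lam t > 0"
    and int: "\<And>t. t \<ge> 0 \<Longrightarrow> set_integrable lborel {0..t} lam"
    and st: "0 \<le> s" "s \<le> (t::real)"
  shows "(LBINT \<tau>=0..s. lam \<tau>) \<le> (LBINT \<tau>=0..t. lam \<tau>)"
proof -
  have "(LBINT \<tau>=0..s. lam \<tau>) = (LBINT \<tau>:{0..s}. lam \<tau>)"
    using st by (simp add: interval_integral_Icc zero_ereal_def)
  also have "\<dots> = (\<integral>x. indicator {0..s} x *\<^sub>R lam x \<partial>lborel)"
    by (simp add: set_lebesgue_integral_def)
  also have "\<dots> \<le> (\<integral>x. indicator {0..t} x *\<^sub>R lam x \<partial>lborel)"
  proof (rule integral_mono)
    show "integrable lborel (\<lambda>x. indicator {0..s} x *\<^sub>R lam x)"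
      using int[of s] st by (simp add: set_integrable_def)
    show "integrable lborel (\<lambda>x. indicator {0..t} x *\<^sub>R lam x)"
      using int[of t] st by (simp add: set_integrable_def)
    fix x :: real
    show "indicator {0..s} x *\<^sub>R lam x \<le> indicator {0..t} x *\<^sub>R lam x"
      using pos[of x] st by (auto simp: indicator_def)
  qed
  also have "\<dots> = (LBINT \<tau>:{0..t}. lam \<tau>)"
    by (simp add: set_lebesgue_integral_def)
  also have "\<dots> = (LBINT \<tau>=0..t. lam \<tau>)"
    using st by (simp add: interval_integral_Icc zero_ereal_def)
  finally show ?thesis .
qed

lemma Lam_zero: "(LBINT \<tau>=0..(0::real). (lam::real\<Rightarrow>real) \<tau>) = 0"
  by (simp add: interval_integral_Icc zero_ereal_def)

lemma Lam_nonneg: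
  fixes lam :: "real \<Rightarrow> real"
  assumes pos: "\<And>t. t \<ge> 0 \<Longrightarrow> lam t > 0"
    and int: "\<And>t. t \<ge> 0 \<Longrightarrow> set_integrable lborel {0..t} lam"
    and "0 \<le> (s::real)"
  shows "0 \<le> (LBINT \<tau>=0..s. lam \<tau>)"
  using Lam_mono[OF pos int order_refl assms(3)] Lam_zero[of lam] by simp

lemma Lam_max_mono:
  fixes lam :: "real \<Rightarrow> real"
  assumes pos: "\<And>t. t \<ge> 0 \<Longrightarrow> lam t > 0"
    and int: "\<And>t. t \<ge> 0 \<Longrightarrow> set_integrable lborel {0..t} lam"
  shows "mono (\<lambda>x::real. (LBINT \<tau>=0..(max 0 x::real). lam \<tau>))"
  by (rule monoI) (rule Lam_mono[OF pos int], auto)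

lemma Inf_less_char:
  fixes f :: "real \<Rightarrow> real"
  assumes mono: "mono_on {0..} f"
  shows "(Inf {u. 0 \<le> u \<and> T < f u} < c) \<longleftrightarrow>
    ((\<not> (\<exists>n::nat. T < f (real n)) \<and> Inf ({}::real set) < c) \<or> (\<exists>r\<in>\<rat>. r < c \<and> 0 \<le> r \<and> T < f r))"
proof (cases "{u. 0 \<le> u \<and> T < f u} = {}")
  case True
  then have "\<not> (\<exists>n::nat. T < f (real n))" by auto
  moreover have "\<not> (\<exists>r\<in>\<rat>. r < c \<and> 0 \<le> r \<and> T < f r)" using True by auto
  moreover have "Inf {u. 0 \<le> u \<and> T < f u} = Inf ({}::real set)" using True by (simp only:)
  ultimately show ?thesis by auto
next
  case False
  then obtain u where u: "0 \<le> u" "T < f u" by auto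
  have "f u \<le> f (real (nat \<lceil>u\<rceil>))"
  proof (rule mono_onD[OF mono])
    show "u \<le> real (nat \<lceil>u\<rceil>)" using u real_nat_ceiling_ge by blast
  qed (use u in auto)
  then have ex: "\<exists>n::nat. T < f (real n)" using u by (intro exI[of _ "nat \<lceil>u\<rceil>"]) auto
  have "Inf {u. 0 \<le> u \<and> T < f u} < c \<longleftrightarrow> (\<exists>x\<in>{u. 0 \<le> u \<and> T < f u}. x < c)"
    using False by (intro cInf_less_iff) (auto intro: bdd_belowI[of _ 0])
  also have "\<dots> \<longleftrightarrow> (\<exists>r\<in>\<rat>. r < c \<and> 0 \<le> r \<and> T < f r)"
  proof
    assume "\<exists>x\<in>{u. 0 \<le> u \<and> T < f u}. x < c"
    then obtain x where x: "0 \<le> x" "T < f x" "x < c" by auto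
    obtain r where r: "r \<in> \<rat>" "x < r" "r < c" using Rats_dense_in_real[OF x(3)] by auto
    have "f x \<le> f r" using x r by (intro mono_onD[OF mono]) auto
    then show "\<exists>r\<in>\<rat>. r < c \<and> 0 \<le> r \<and> T < f r" using x r by (intro bexI[of _ r]) auto
  qed auto
  finally show ?thesis using ex by auto
qed

lemma Inf_to_infinity:
  fixes f :: "real \<Rightarrow> real"
  assumes mono: "mono_on {0..} f" and unb: "\<And>T. \<exists>n::nat. T < f (real n)"
  shows "filterlim (\<lambda>T. Inf {u. 0 \<le> u \<and> T < f u}) at_top at_top"
    and "\<And>T. 0 \<le> Inf {u. 0 \<le> u \<and> T < f u}"
proof -
  have ne: "{u. 0 \<le> u \<and> T < f u} \<noteq> {}" for T using unb[of T] by force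
  show "0 \<le> Inf {u. 0 \<le> u \<and> T < f u}" for T
    using ne[of T] by (intro cInf_greatest) auto
  show "filterlim (\<lambda>T. Inf {u. 0 \<le> u \<and> T < f u}) at_top at_top"
    unfolding filterlim_at_top
  proof (intro allI)
    fix z :: real
    show "\<forall>\<^sub>F T in at_top. z \<le> Inf {u. 0 \<le> u \<and> T < f u}"
      using eventually_ge_at_top[of "f (max 0 z)"]
    proof eventually_elim
      case (elim T)
      show ?case
      proof (rule cInf_greatest[OF ne])
        fix v assume v: "v \<in> {u. 0 \<le> u \<and> T < f u}"
        show "z \<le> v"
        proof (rule ccontr)
          assume "\<not> z \<le> v"
          then have "f v \<le> f (max 0 z)" using v by (intro mono_onD[OF mono]) auto
          then show False using v elim by auto
        qed
      qed
    qed
  qed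
qed


definition qp :: "real \<Rightarrow> nat \<Rightarrow> real" where
  "qp m j = m ^ j / fact j * exp (- m)"

locale LP =
  fixes M :: "'a measure" and N1 :: "real \<Rightarrow> 'a \<Rightarrow> nat" and L :: "real \<Rightarrow> 'a \<Rightarrow> real" and \<alpha> :: real
  assumes ps: "prob_space M" and pp: "std_poisson_process M N1" and sub: "stable_subordinator M \<alpha> L"
    and ind: "prob_space.indep_var M
           (PiM UNIV (\<lambda>_::real. (borel::real measure))) (\<lambda>\<omega> t. real (N1 t \<omega>))
           (PiM UNIV (\<lambda>_::real. (borel::real measure))) (\<lambda>\<omega> t. L t \<omega>)"
begin

sublocale prob_space M by (rule ps)

abbreviation "PP \<equiv> PiM UNIV (\<lambda>_::real. (borel::real measure))"

definition "V = vimage_algebra (space M) (\<lambda>\<omega> t. L t \<omega>) PP"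

lemma Lpath_meas: "(\<lambda>\<omega> t. L t \<omega>) \<in> measurable M PP"
  using indep_var_rv2[OF ind] .

lemma Npath_meas: "(\<lambda>\<omega> t. real (N1 t \<omega>)) \<in> measurable M PP"
  using indep_var_rv1[OF ind] .

lemma space_V[simp]: "space V = space M"
  by (simp add: V_def)

lemma Lpath_funcset: "(\<lambda>\<omega> t. L t \<omega>) \<in> space M \<rightarrow> space PP"
  using measurable_space[OF Lpath_meas] by auto

lemma sets_V: "sets V = {(\<lambda>\<omega> t. L t \<omega>) -` S \<inter> space M | S. S \<in> sets PP}"
  unfolding V_def by (rule sets_vimage_algebra2[OF Lpath_funcset])

lemma sets_V_sub: "sets V \<subseteq> sets M"
  unfolding sets_V using measurable_sets[OF Lpath_meas] by auto

lemma subalg: "subalgebra M V"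
  unfolding subalgebra_def using sets_V_sub by simp

lemma L_meas_V[measurable]: "L t \<in> borel_measurable V"
proof -
  have "(\<lambda>\<omega> t. L t \<omega>) \<in> measurable V PP"
    unfolding V_def by (rule measurable_vimage_algebra1[OF Lpath_funcset])
  from measurable_compose[OF this measurable_component_singleton[of t UNIV "\<lambda>_. borel"]]
  show ?thesis by simp
qed

lemma pp1: "\<forall>t. N1 t \<in> measurable M (count_space UNIV)"
  using pp unfolding std_poisson_process_def by (rule conjunct1)
lemma pp2: "\<forall>\<omega>\<in>space M. N1 0 \<omega> = 0 \<and> mono_on {0..} (\<lambda>t. N1 t \<omega>) \<and>
        (\<forall>t\<ge>0. continuous (at_right t) (\<lambda>s. real (N1 s \<omega>)))"
  using pp unfolding std_poisson_process_def by (rule conjunct1[OF conjunct2])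
lemma pp4: "\<forall>s t. 0 \<le> s \<and> s < t \<longrightarrow>
        distr M (count_space UNIV) (\<lambda>\<omega>. N1 t \<omega> - N1 s \<omega>) = measure_pmf (poisson_pmf (t - s))"
  using pp unfolding std_poisson_process_def by (rule conjunct2[OF conjunct2[OF conjunct2]])
lemma sb1: "\<forall>t. L t \<in> borel_measurable M"
  using sub unfolding stable_subordinator_def by (rule conjunct1)
lemma sb2: "\<forall>\<omega>\<in>space M. L 0 \<omega> = 0 \<and> mono_on {0..} (\<lambda>t. L t \<omega>) \<and>
        (\<forall>t\<ge>0. continuous (at_right t) (\<lambda>s. L s \<omega>))"
  using sub unfolding stable_subordinator_def by (rule conjunct1[OF conjunct2])
lemma sb4: "\<forall>s t u. 0 \<le> s \<and> s \<le> t \<and> 0 \<le> u \<longrightarrow>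
        expectation (\<lambda>\<omega>. exp (- u * (L t \<omega> - L s \<omega>))) = exp (- (t - s) * u powr \<alpha>)"
  using sub unfolding stable_subordinator_def by (rule conjunct2[OF conjunct2[OF conjunct2]])

lemma N_meas[measurable]: "(\<lambda>\<omega>. N1 t \<omega>) \<in> measurable M (count_space UNIV)"
  using pp1 by simp

lemma N0: "\<omega> \<in> space M \<Longrightarrow> N1 0 \<omega> = 0"
  using pp2 by simp

lemma N_mono: "\<omega> \<in> space M \<Longrightarrow> mono_on {0..} (\<lambda>t. N1 t \<omega>)"
  using pp2 by simp

lemma N_rcont: "\<omega> \<in> space M \<Longrightarrow> t \<ge> 0 \<Longrightarrow> continuous (at_right t) (\<lambda>s. real (N1 s \<omega>))"
  using pp2 by simp

lemma L_mono: "\<omega> \<in> space M \<Longrightarrow> mono_on {0..} (\<lambda>t. L t \<omega>)"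
  using sb2 by simp

lemma L0: "\<omega> \<in> space M \<Longrightarrow> L 0 \<omega> = 0"
  using sb2 by simp

lemma L_meas[measurable]: "L t \<in> borel_measurable M"
  using sb1 by simp

lemma N_distr: "0 \<le> s \<Longrightarrow> s < t \<Longrightarrow>
   distr M (count_space UNIV) (\<lambda>\<omega>. N1 t \<omega> - N1 s \<omega>) = measure_pmf (poisson_pmf (t - s))"
  using pp4 by simp

lemma prob_N:
  assumes "t \<ge> 0"
  shows "measure M {\<omega>\<in>space M. N1 t \<omega> = j} = qp t j"
proof (cases "t = 0")
  case True
  then have "{\<omega>\<in>space M. N1 t \<omega> = j} = (if j = 0 then space M else {})"
    using N0 by auto
  then show ?thesis using True by (simp add: qp_def prob_space)
next
  case False
  then have t: "t > 0" using assms by simp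
  have "distr M (count_space UNIV) (\<lambda>\<omega>. N1 t \<omega> - N1 0 \<omega>) = measure_pmf (poisson_pmf (t - 0))"
    using N_distr[of 0 t] t by simp
  moreover have "distr M (count_space UNIV) (\<lambda>\<omega>. N1 t \<omega> - N1 0 \<omega>) = distr M (count_space UNIV) (N1 t)"
    by (rule distr_cong) (auto simp: N0)
  ultimately have d: "distr M (count_space UNIV) (N1 t) = measure_pmf (poisson_pmf t)" by simp
  have "measure M {\<omega>\<in>space M. N1 t \<omega> = j} = measure (distr M (count_space UNIV) (N1 t)) {j}"
    by (subst measure_distr) (auto intro!: arg_cong[where f="measure M"])
  also have "\<dots> = pmf (poisson_pmf t) j"
    unfolding d by (simp add: measure_pmf_single)
  also have "\<dots> = qp t j" using t by (simp add: qp_def)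
  finally show ?thesis .
qed

lemma indep_event:
  assumes D: "D \<in> sets V"
  shows "measure M ({\<omega>\<in>space M. N1 t \<omega> = j} \<inter> D) = measure M {\<omega>\<in>space M. N1 t \<omega> = j} * measure M D"
proof -
  obtain S where S: "S \<in> sets PP" "D = (\<lambda>\<omega> t. L t \<omega>) -` S \<inter> space M"
    using D unfolding sets_V by auto
  define Xa where "Xa = (\<lambda>f. f t) -` {real j} \<inter> space PP"
  have Xa: "Xa \<in> sets PP" unfolding Xa_def
    by (rule measurable_sets[OF measurable_component_singleton]) auto
  have e1: "(\<lambda>\<omega> t. real (N1 t \<omega>)) -` Xa \<inter> space M = {\<omega>\<in>space M. N1 t \<omega> = j}"
    by (auto simp: Xa_def space_PiM)
  have e2: "(\<lambda>x. ((\<lambda>\<omega> t. real (N1 t \<omega>)) x, (\<lambda>\<omega> t. L t \<omega>) x)) -` (Xa \<times> S) \<inter> space M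
      = {\<omega>\<in>space M. N1 t \<omega> = j} \<inter> D"
    using e1 S(2) by auto
  have "measure M ({\<omega>\<in>space M. N1 t \<omega> = j} \<inter> D) = measure M ((\<lambda>x. ((\<lambda>\<omega> t. real (N1 t \<omega>)) x, (\<lambda>\<omega> t. L t \<omega>) x)) -` (Xa \<times> S) \<inter> space M)"
    by (simp only: e2)
  also have "\<dots> = measure M ((\<lambda>\<omega> t. real (N1 t \<omega>)) -` Xa \<inter> space M) * measure M ((\<lambda>\<omega> t. L t \<omega>) -` S \<inter> space M)"
    by (rule indep_varD[OF ind Xa S(1)])
  also have "\<dots> = measure M {\<omega>\<in>space M. N1 t \<omega> = j} * measure M D"
    by (simp only: e1 S(2))
  finally show ?thesis .
qed

lemma Y_meas[measurable]: "inverse_subordinator L T \<in> borel_measurable V"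
proof (rule borel_measurable_iff_less[THEN iffD2], intro allI)
  fix c :: real
  have "{\<omega> \<in> space V. inverse_subordinator L T \<omega> < c} =
    {\<omega> \<in> space V. (\<not> (\<exists>n::nat. T < L (real n) \<omega>) \<and> Inf ({}::real set) < c) \<or> (\<exists>r\<in>\<rat>. r < c \<and> 0 \<le> r \<and> T < L r \<omega>)}"
  proof (intro Collect_cong conj_cong refl)
    fix \<omega> assume "\<omega> \<in> space V"
    then show "(inverse_subordinator L T \<omega> < c) = ((\<not> (\<exists>n::nat. T < L (real n) \<omega>) \<and> Inf ({}::real set) < c) \<or> (\<exists>r\<in>\<rat>. r < c \<and> 0 \<le> r \<and> T < L r \<omega>))"
      unfolding inverse_subordinator_def using Inf_less_char[OF L_mono[of \<omega>]] by simp
  qed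
  also have "\<dots> \<in> sets V"
  proof -
    have m1: "{\<omega>\<in>space V. T < L r \<omega>} \<in> sets V" for r by measurable
    have A1: "{\<omega>\<in>space V. \<exists>n::nat. T < L (real n) \<omega>} \<in> sets V"
    proof -
      have "{\<omega>\<in>space V. \<exists>n::nat. T < L (real n) \<omega>} = (\<Union>n. {\<omega>\<in>space V. T < L (real n) \<omega>})" by blast
      then show ?thesis using m1 by (simp add: sets.countable_UN)
    qed
    have A2: "{\<omega>\<in>space V. \<exists>r\<in>\<rat>. r < c \<and> 0 \<le> r \<and> T < L r \<omega>} \<in> sets V"
    proof -
      have "{\<omega>\<in>space V. \<exists>r\<in>\<rat>. r < c \<and> 0 \<le> r \<and> T < L r \<omega>} = (\<Union>r\<in>\<rat> \<inter> {r. r < c \<and> 0 \<le> r}. {\<omega>\<in>space V. T < L r \<omega>})" by blast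
      moreover have "countable (\<rat> \<inter> {r. r < c \<and> 0 \<le> r})" using countable_rat by auto
      ultimately show ?thesis using m1 by (auto intro!: sets.countable_UN' simp del: UN_simps)
    qed
    have "{\<omega> \<in> space V. (\<not> (\<exists>n::nat. T < L (real n) \<omega>) \<and> Inf ({}::real set) < c) \<or> (\<exists>r\<in>\<rat>. r < c \<and> 0 \<le> r \<and> T < L r \<omega>)}
      = (if Inf ({}::real set) < c then space V - {\<omega>\<in>space V. \<exists>n::nat. T < L (real n) \<omega>} else {}) \<union> {\<omega>\<in>space V. \<exists>r\<in>\<rat>. r < c \<and> 0 \<le> r \<and> T < L r \<omega>}"
      by auto
    moreover have "space V - {\<omega>\<in>space V. \<exists>n::nat. T < L (real n) \<omega>} \<in> sets V"
      using sets.compl_sets[OF A1] .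
    ultimately show ?thesis using A2 by (auto simp del: space_V)
  qed
  finally show "{\<omega> \<in> space V. inverse_subordinator L T \<omega> < c} \<in> sets V" .
qed

lemma gen_sigma_sub: "gen_sigma M (inverse_subordinator L) \<subseteq> sets V"
proof -
  have "(\<Union>s\<in>{0..}. {inverse_subordinator L s -` A \<inter> space M | A. A \<in> sets borel}) \<subseteq> sets V"
    using measurable_sets[OF Y_meas] by auto
  then show ?thesis
    unfolding gen_sigma_def using sets.sigma_sets_subset[of _ V] by simp
qed

end


lemma nat_tendsto_eventually_eq:
  assumes "(\<lambda>n. real (a n)) \<longlonglongrightarrow> real (b::nat)"
  shows "\<forall>\<^sub>F n in sequentially. a n = b"
proof -
  have "\<forall>\<^sub>F n in sequentially. real (a n) < real b + 1/2"
    by (rule order_tendstoD(2)[OF assms]) simp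
  moreover have "\<forall>\<^sub>F n in sequentially. real (a n) > real b - 1/2"
    by (rule order_tendstoD(1)[OF assms]) simp
  ultimately show ?thesis
  proof eventually_elim
    case (elim n)
    then have "a n < b + 1" "b < a n + 1" by linarith+
    then show ?case by simp
  qed
qed

lemma zn_bounds:
  fixes z :: real assumes "0 \<le> z"
  shows "z \<le> real (nat \<lceil>2^n * z\<rceil>) / 2^n" "real (nat \<lceil>2^n * z\<rceil>) / 2^n \<le> z + inverse (2^n)"
proof -
  have x0: "0 \<le> 2^n * z" using assms by simp
  have e: "real (nat \<lceil>2^n * z\<rceil>) = real_of_int \<lceil>2^n * z\<rceil>" using x0 by simp
  have l: "2^n * z \<le> real_of_int \<lceil>2^n * z\<rceil>" by (rule le_of_int_ceiling)
  have u: "real_of_int \<lceil>2^n * z\<rceil> \<le> 2^n * z + 1" by (rule of_int_ceiling_le_add_one)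
  show "z \<le> real (nat \<lceil>2^n * z\<rceil>) / 2^n" unfolding e using l by (simp add: field_simps)
  show "real (nat \<lceil>2^n * z\<rceil>) / 2^n \<le> z + inverse (2^n)" unfolding e using u by (simp add: field_simps)
qed

lemma zn_tendsto:
  fixes z :: real assumes "0 \<le> z"
  shows "(\<lambda>n. real (nat \<lceil>2^n * z\<rceil>) / 2^n) \<longlonglongrightarrow> z"
proof (rule tendsto_sandwich[of "\<lambda>_. z" _ _ "\<lambda>n. z + inverse (2^n)"])
  show "\<forall>\<^sub>F n in sequentially. z \<le> real (nat \<lceil>2^n * z\<rceil>) / 2^n" using zn_bounds[OF assms] by simp
  show "\<forall>\<^sub>F n in sequentially. real (nat \<lceil>2^n * z\<rceil>) / 2^n \<le> z + inverse (2^n)" using zn_bounds[OF assms] by simp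
  have "(\<lambda>n. z + inverse ((2::real)^n)) \<longlonglongrightarrow> z + 0"
    by (intro tendsto_add tendsto_const LIMSEQ_inverse_realpow_zero) simp
  then show "(\<lambda>n. z + inverse ((2::real)^n)) \<longlonglongrightarrow> z" by simp
qed simp

lemma qp_cont: "isCont (\<lambda>m. qp m j) m"
  unfolding qp_def by (intro continuous_intros) (simp add: fact_ge_1 less_le_trans[OF zero_less_one])

lemma qp_nonneg: "0 \<le> m \<Longrightarrow> 0 \<le> qp m j"
  unfolding qp_def by simp

lemma qp_le1: "0 \<le> m \<Longrightarrow> qp m j \<le> 1"
proof (cases "m = 0")
  case True then show ?thesis by (cases j) (simp_all add: qp_def)
next
  case False
  assume "0 \<le> m"
  with False have "m > 0" by simp
  then have "qp m j = pmf (poisson_pmf m) j" by (simp add: qp_def)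
  then show ?thesis using pmf_le_1 by simp
qed

context LP begin

lemma disc_conv:
  assumes "\<omega> \<in> space M" "0 \<le> z"
  shows "(\<lambda>n. real (N1 (real (nat \<lceil>2^n * z\<rceil>) / 2^n) \<omega>)) \<longlonglongrightarrow> real (N1 z \<omega>)"
proof -
  have c: "continuous (at_right z) (\<lambda>s. real (N1 s \<omega>))" using N_rcont assms by simp
  have "at z within {z..} = at_right z"
  proof -
    have "{z..} - {z} = {z<..}" by auto
    then show ?thesis by (simp add: at_within_def)
  qed
  with c have c': "continuous (at z within {z..}) (\<lambda>s. real (N1 s \<omega>))" by simp
  show ?thesis
    using c'[unfolded continuous_within_sequentially, rule_format, of "\<lambda>n. real (nat \<lceil>2^n * z\<rceil>) / 2^n"]
      zn_bounds[OF assms(2)] zn_tendsto[OF assms(2)] by (simp add: o_def)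
qed

lemma N_at_meas:
  assumes Z: "Z \<in> borel_measurable M" and Z0: "\<And>\<omega>. \<omega> \<in> space M \<Longrightarrow> 0 \<le> Z \<omega>"
  shows "(\<lambda>\<omega>. real (N1 (Z \<omega>) \<omega>)) \<in> borel_measurable M"
proof (rule borel_measurable_LIMSEQ_real)
  fix \<omega> assume "\<omega> \<in> space M"
  then show "(\<lambda>n. real (N1 (real (nat \<lceil>2^n * Z \<omega>\<rceil>) / 2^n) \<omega>)) \<longlonglongrightarrow> real (N1 (Z \<omega>) \<omega>)"
    using disc_conv Z0 by simp
next
  fix n :: nat
  have g: "(\<lambda>\<omega>. nat \<lceil>2^n * Z \<omega>\<rceil>) \<in> measurable M (count_space UNIV)"
    using Z by measurable
  have f: "(\<lambda>\<omega>. real (N1 (real k / 2^n) \<omega>)) \<in> borel_measurable M" for k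
    by measurable
  show "(\<lambda>\<omega>. real (N1 (real (nat \<lceil>2^n * Z \<omega>\<rceil>) / 2^n) \<omega>)) \<in> borel_measurable M"
    by (rule measurable_compose_countable'[OF f g]) auto
qed

end


context LP begin

lemma V_sub_M: "A \<in> sets V \<Longrightarrow> A \<in> sets M"
  using sets_V_sub by auto

lemma meas_V_M: "f \<in> borel_measurable V \<Longrightarrow> f \<in> borel_measurable M"
  by (rule measurable_from_subalg[OF subalg])

lemma key_discrete:
  fixes Z :: "'a \<Rightarrow> real"
  assumes Zm: "Z \<in> borel_measurable V" and Z0: "\<And>\<omega>. \<omega> \<in> space M \<Longrightarrow> 0 \<le> Z \<omega>" and C: "C \<in> sets V"
  shows "emeasure M ({\<omega>\<in>space M. N1 (real (nat \<lceil>2^n * Z \<omega>\<rceil>) / 2^n) \<omega> = j} \<inter> C)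
       = (\<integral>\<^sup>+\<omega>. ennreal (indicator C \<omega> * qp (real (nat \<lceil>2^n * Z \<omega>\<rceil>) / 2^n) j) \<partial>M)"
proof -
  define K where "K \<omega> = nat \<lceil>2^n * Z \<omega>\<rceil>" for \<omega>
  have Km: "K \<in> measurable V (count_space UNIV)"
    unfolding K_def using Zm by measurable
  define E where "E k = {\<omega>\<in>space M. N1 (real k / 2^n) \<omega> = j}" for k :: nat
  define D where "D k = {\<omega>\<in>space M. K \<omega> = k} \<inter> C" for k :: nat
  have DV: "D k \<in> sets V" for k
  proof -
    have "{\<omega>\<in>space V. K \<omega> = k} \<in> sets V" using Km by measurable
    then show ?thesis unfolding D_def using C by auto
  qed
  have DM: "D k \<in> sets M" for k using DV V_sub_M by auto
  have EM: "E k \<in> sets M" for k unfolding E_def by measurable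
  have un: "{\<omega>\<in>space M. N1 (real (nat \<lceil>2^n * Z \<omega>\<rceil>) / 2^n) \<omega> = j} \<inter> C = (\<Union>k. E k \<inter> D k)"
    unfolding E_def D_def K_def by auto
  have disj: "disjoint_family (\<lambda>k. E k \<inter> D k)"
    unfolding disjoint_family_on_def D_def by auto
  have "emeasure M ({\<omega>\<in>space M. N1 (real (nat \<lceil>2^n * Z \<omega>\<rceil>) / 2^n) \<omega> = j} \<inter> C)
      = (\<Sum>k. emeasure M (E k \<inter> D k))"
    unfolding un by (rule suminf_emeasure[symmetric]) (use EM DM disj in auto)
  also have "\<dots> = (\<Sum>k. ennreal (qp (real k / 2^n) j) * emeasure M (D k))"
  proof (intro suminf_cong)
    fix k
    have "emeasure M (E k \<inter> D k) = ennreal (measure M (E k) * measure M (D k))"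
      using indep_event[OF DV, of "real k / 2^n" j] EM DM
      by (simp add: emeasure_eq_measure E_def)
    also have "\<dots> = ennreal (qp (real k / 2^n) j) * emeasure M (D k)"
      using prob_N[of "real k / 2^n" j] qp_nonneg[of "real k / 2^n" j]
      by (simp add: E_def emeasure_eq_measure ennreal_mult)
    finally show "emeasure M (E k \<inter> D k) = ennreal (qp (real k / 2^n) j) * emeasure M (D k)" .
  qed
  also have "\<dots> = (\<Sum>k. \<integral>\<^sup>+\<omega>. ennreal (qp (real k / 2^n) j) * indicator (D k) \<omega> \<partial>M)"
    using DM by (simp add: nn_integral_cmult_indicator)
  also have "\<dots> = (\<integral>\<^sup>+\<omega>. (\<Sum>k. ennreal (qp (real k / 2^n) j) * indicator (D k) \<omega>) \<partial>M)"
    by (rule nn_integral_suminf[symmetric]) (use DM in measurable)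
  also have "\<dots> = (\<integral>\<^sup>+\<omega>. ennreal (indicator C \<omega> * qp (real (nat \<lceil>2^n * Z \<omega>\<rceil>) / 2^n) j) \<partial>M)"
  proof (rule nn_integral_cong)
    fix \<omega> assume \<omega>: "\<omega> \<in> space M"
    have "(\<lambda>k. ennreal (qp (real k / 2^n) j) * indicator (D k) \<omega>)
        = (\<lambda>k. if k = K \<omega> then ennreal (indicator C \<omega> * qp (real (K \<omega>) / 2^n) j) else 0)"
      using \<omega> qp_nonneg[of "real (K \<omega>) / 2^n" j]
      by (auto simp: D_def indicator_def fun_eq_iff)
    then show "(\<Sum>k. ennreal (qp (real k / 2^n) j) * indicator (D k) \<omega>)
        = ennreal (indicator C \<omega> * qp (real (nat \<lceil>2^n * Z \<omega>\<rceil>) / 2^n) j)"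
      using sums_unique[OF sums_single[of "K \<omega>" "\<lambda>k. ennreal (indicator C \<omega> * qp (real (K \<omega>) / 2^n) j)"]]
      by (simp add: K_def)
  qed
  finally show ?thesis .
qed

lemma qp_meas[measurable]: "(\<lambda>m. qp m j) \<in> borel_measurable borel"
  unfolding qp_def by measurable

lemma N_at_set:
  fixes Z :: "'a \<Rightarrow> real"
  assumes Z: "Z \<in> borel_measurable M" and Z0: "\<And>\<omega>. \<omega> \<in> space M \<Longrightarrow> 0 \<le> Z \<omega>"
  shows "{\<omega>\<in>space M. N1 (Z \<omega>) \<omega> = j} \<in> sets M"
proof -
  have [measurable]: "(\<lambda>\<omega>. real (N1 (Z \<omega>) \<omega>)) \<in> borel_measurable M"
    by (rule N_at_meas[OF Z Z0])
  have "{\<omega>\<in>space M. real (N1 (Z \<omega>) \<omega>) = real j} \<in> sets M" by measurable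
  then show ?thesis by simp
qed

lemma key:
  fixes Z :: "'a \<Rightarrow> real"
  assumes Zm: "Z \<in> borel_measurable V" and Z0: "\<And>\<omega>. \<omega> \<in> space M \<Longrightarrow> 0 \<le> Z \<omega>" and C: "C \<in> sets V"
  shows "emeasure M ({\<omega>\<in>space M. N1 (Z \<omega>) \<omega> = j} \<inter> C) = (\<integral>\<^sup>+\<omega>. ennreal (indicator C \<omega> * qp (Z \<omega>) j) \<partial>M)"
proof -
  define Zn where "Zn n \<omega> = real (nat \<lceil>2^n * Z \<omega>\<rceil>) / 2^n" for n \<omega>
  have ZM[measurable]: "Z \<in> borel_measurable M" by (rule meas_V_M[OF Zm])
  have CM[measurable]: "C \<in> sets M" by (rule V_sub_M[OF C])
  have ZnM[measurable]: "Zn n \<in> borel_measurable M" for n unfolding Zn_def by measurable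
  have Zn0: "\<omega> \<in> space M \<Longrightarrow> 0 \<le> Zn n \<omega>" for n \<omega> unfolding Zn_def by simp
  define Sn where "Sn n = {\<omega>\<in>space M. N1 (Zn n \<omega>) \<omega> = j} \<inter> C" for n
  define S where "S = {\<omega>\<in>space M. N1 (Z \<omega>) \<omega> = j} \<inter> C"
  have SnM[measurable]: "Sn n \<in> sets M" for n
    unfolding Sn_def using N_at_set[OF ZnM Zn0] CM by auto
  have SM[measurable]: "S \<in> sets M"
    unfolding S_def using N_at_set[OF ZM Z0] CM by auto
  define fn where "fn n \<omega> = indicator C \<omega> * qp (Zn n \<omega>) j" for n \<omega>
  define f where "f \<omega> = indicator C \<omega> * qp (Z \<omega>) j" for \<omega>
  have fnM[measurable]: "fn n \<in> borel_measurable M" for n unfolding fn_def by measurable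
  have fM[measurable]: "f \<in> borel_measurable M" unfolding f_def by measurable
  have fn_bd: "\<omega> \<in> space M \<Longrightarrow> 0 \<le> fn n \<omega> \<and> fn n \<omega> \<le> 1" for n \<omega>
    unfolding fn_def using qp_nonneg[OF Zn0] qp_le1[OF Zn0] by (auto simp: indicator_def)
  have f_bd: "\<omega> \<in> space M \<Longrightarrow> 0 \<le> f \<omega> \<and> f \<omega> \<le> 1" for \<omega>
    unfolding f_def using qp_nonneg[OF Z0] qp_le1[OF Z0] by (auto simp: indicator_def)
  have int_fn: "integrable M (fn n)" for n
    by (rule integrable_const_bound[where B=1]) (use fn_bd in auto)
  have int_f: "integrable M f"
    by (rule integrable_const_bound[where B=1]) (use f_bd in auto)
  have disc: "measure M (Sn n) = integral\<^sup>L M (fn n)" for n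
  proof -
    have "ennreal (measure M (Sn n)) = emeasure M (Sn n)" by (simp add: emeasure_eq_measure)
    also have "\<dots> = (\<integral>\<^sup>+\<omega>. ennreal (fn n \<omega>) \<partial>M)"
      unfolding Sn_def fn_def Zn_def by (rule key_discrete[OF Zm Z0 C])
    also have "\<dots> = ennreal (integral\<^sup>L M (fn n))"
      by (rule nn_integral_eq_integral[OF int_fn]) (use fn_bd in auto)
    finally show ?thesis by (simp add: integral_nonneg_AE fn_bd)
  qed
  have lim1: "(\<lambda>n. measure M (Sn n)) \<longlonglongrightarrow> measure M S"
  proof -
    have "(\<lambda>n. integral\<^sup>L M (indicator (Sn n) :: 'a \<Rightarrow> real)) \<longlonglongrightarrow> integral\<^sup>L M (indicator S)"
    proof (rule integral_dominated_convergence[where w="\<lambda>_. 1"])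
      show "AE \<omega> in M. (\<lambda>n. indicator (Sn n) \<omega> :: real) \<longlonglongrightarrow> indicator S \<omega>"
      proof (rule AE_I2)
        fix \<omega> assume \<omega>: "\<omega> \<in> space M"
        have "\<forall>\<^sub>F n in sequentially. N1 (Zn n \<omega>) \<omega> = N1 (Z \<omega>) \<omega>"
          by (rule nat_tendsto_eventually_eq) (unfold Zn_def, rule disc_conv[OF \<omega> Z0[OF \<omega>]])
        then have "\<forall>\<^sub>F n in sequentially. (indicator (Sn n) \<omega> :: real) = indicator S \<omega>"
          by eventually_elim (simp add: Sn_def S_def indicator_def)
        then show "(\<lambda>n. indicator (Sn n) \<omega> :: real) \<longlonglongrightarrow> indicator S \<omega>"
          by (rule tendsto_eventually)
      qed
    qed (auto simp: indicator_def)
    then show ?thesis by simp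
  qed
  have lim2: "(\<lambda>n. integral\<^sup>L M (fn n)) \<longlonglongrightarrow> integral\<^sup>L M f"
  proof (rule integral_dominated_convergence[where w="\<lambda>_. 1"])
    show "AE \<omega> in M. (\<lambda>n. fn n \<omega>) \<longlonglongrightarrow> f \<omega>"
    proof (rule AE_I2)
      fix \<omega> assume \<omega>: "\<omega> \<in> space M"
      have "(\<lambda>n. qp (Zn n \<omega>) j) \<longlonglongrightarrow> qp (Z \<omega>) j"
        unfolding Zn_def by (rule isCont_tendsto_compose[OF qp_cont zn_tendsto[OF Z0[OF \<omega>]]])
      then show "(\<lambda>n. fn n \<omega>) \<longlonglongrightarrow> f \<omega>"
        unfolding fn_def f_def by (intro tendsto_mult tendsto_const)
    qed
    show "AE \<omega> in M. norm (fn n \<omega>) \<le> 1" for n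
      using fn_bd by (auto intro!: AE_I2)
  qed auto
  have eq: "measure M S = integral\<^sup>L M f"
    using LIMSEQ_unique[OF lim1 lim2[folded disc]] .
  have "emeasure M S = ennreal (measure M S)" by (simp add: emeasure_eq_measure)
  also have "\<dots> = ennreal (integral\<^sup>L M f)" by (simp add: eq)
  also have "\<dots> = (\<integral>\<^sup>+\<omega>. ennreal (f \<omega>) \<partial>M)"
    by (rule nn_integral_eq_integral[OF int_f, symmetric]) (use f_bd in auto)
  finally show ?thesis unfolding S_def f_def .
qed

end


context LP begin

lemma L_nonneg: "\<omega> \<in> space M \<Longrightarrow> 0 \<le> t \<Longrightarrow> 0 \<le> L t \<omega>"
  using mono_onD[OF L_mono[of \<omega>], of 0 t] L0[of \<omega>] by simp

lemma expect_L: "0 \<le> t \<Longrightarrow> expectation (\<lambda>\<omega>. exp (- L t \<omega>)) = exp (- t)"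
proof -
  assume t: "0 \<le> t"
  have "expectation (\<lambda>\<omega>. exp (- 1 * (L t \<omega> - L 0 \<omega>))) = exp (- (t - 0) * 1 powr \<alpha>)"
    using sb4[rule_format, of 0 t 1] t by simp
  moreover have "expectation (\<lambda>\<omega>. exp (- 1 * (L t \<omega> - L 0 \<omega>))) = expectation (\<lambda>\<omega>. exp (- L t \<omega>))"
    by (rule Bochner_Integration.integral_cong) (auto simp: L0)
  ultimately show ?thesis by simp
qed

definition "Bad = (\<Union>k::nat. {\<omega>\<in>space M. \<forall>n::nat. L (real n) \<omega> \<le> real k})"

lemma Bad_null: "Bad \<in> null_sets M"
proof -
  have Bk: "{\<omega>\<in>space M. \<forall>n::nat. L (real n) \<omega> \<le> real k} \<in> null_sets M" for k :: nat
  proof -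
    define Bk where "Bk = {\<omega>\<in>space M. \<forall>n::nat. L (real n) \<omega> \<le> real k}"
    have BkM[measurable]: "Bk \<in> sets M" unfolding Bk_def by measurable
    have le: "exp (- real k) * measure M Bk \<le> exp (- real n)" for n :: nat
    proof -
      have "exp (- real k) * measure M Bk = (\<integral>\<omega>. indicator Bk \<omega> * exp (- real k) \<partial>M)"
        by simp
      also have "\<dots> \<le> (\<integral>\<omega>. exp (- L (real n) \<omega>) \<partial>M)"
      proof (rule integral_mono)
        show "integrable M (\<lambda>\<omega>. indicator Bk \<omega> * exp (- real k))"
          by (rule integrable_const_bound[where B="exp (- real k)"]) (auto intro!: AE_I2 simp: indicator_def)
        show "integrable M (\<lambda>\<omega>. exp (- L (real n) \<omega>))"
          by (rule integrable_const_bound[where B=1]) (auto intro!: AE_I2 simp: L_nonneg)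
        fix \<omega> assume "\<omega> \<in> space M"
        then show "indicator Bk \<omega> * exp (- real k) \<le> exp (- L (real n) \<omega>)"
          by (auto simp: Bk_def indicator_def)
      qed
      also have "\<dots> = exp (- real n)" using expect_L[of "real n"] by simp
      finally show ?thesis .
    qed
    have "measure M Bk = 0"
    proof (rule ccontr)
      assume "measure M Bk \<noteq> 0"
      then have pos: "0 < exp (- real k) * measure M Bk" by (simp add: zero_less_measure_iff)
      have "(\<lambda>n. exp (- real n)) \<longlonglongrightarrow> (0::real)"
        by (rule filterlim_compose[OF exp_at_bot filterlim_compose[OF filterlim_uminus_at_bot_at_top filterlim_real_sequentially]])
      from order_tendstoD(2)[OF this pos] obtain n where "exp (- real n) < exp (- real k) * measure M Bk"
        by (auto simp: eventually_sequentially)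
      with le[of n] show False by simp
    qed
    then show ?thesis unfolding Bk_def[symmetric] using BkM
      by (simp add: null_sets_def emeasure_eq_measure)
  qed
  show ?thesis unfolding Bad_def by (intro null_sets_UN) (rule Bk)
qed

lemma not_Bad_unbounded:
  assumes "\<omega> \<in> space M" "\<omega> \<notin> Bad"
  shows "\<exists>n::nat. T < L (real n) \<omega>"
proof -
  obtain k :: nat where "T \<le> real k" using real_arch_simple by blast
  moreover have "\<not> (\<forall>n::nat. L (real n) \<omega> \<le> real k)" using assms unfolding Bad_def by auto
  ultimately obtain n where "T < L (real n) \<omega>" by (meson not_le order_le_less_trans)
  then show ?thesis by blast
qed

end


lemma qp_sums: "0 \<le> m \<Longrightarrow> (\<lambda>j. qp m j) sums 1"
proof -
  have "(\<lambda>j. exp (- m) * (m ^ j /\<^sub>R fact j)) sums (exp (- m) * exp m)"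
    by (intro sums_mult exp_converges)
  then show ?thesis by (simp add: qp_def exp_minus field_simps)
qed

definition H :: "real set \<Rightarrow> real \<Rightarrow> ennreal" where
  "H A m = (\<Sum>j. ennreal (qp m j * indicator A ((real j - m) / sqrt m)))"

lemma H_le1: "0 \<le> m \<Longrightarrow> H A m \<le> 1"
proof -
  assume m: "0 \<le> m"
  have "H A m \<le> (\<Sum>j. ennreal (qp m j))"
    unfolding H_def
    by (intro suminf_le) (auto simp: indicator_def qp_nonneg[OF m])
  also have "\<dots> = ennreal (\<Sum>j. qp m j)"
    using qp_sums[OF m] qp_nonneg[OF m] by (intro suminf_ennreal2) (auto simp: sums_iff)
  also have "\<dots> = 1" using qp_sums[OF m] by (simp add: sums_iff)
  finally show ?thesis .
qed

lemma H_pmf: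
  assumes A: "A \<in> sets borel" and m: "0 < m"
  shows "H A m = emeasure (distr (measure_pmf (poisson_pmf m)) borel (\<lambda>k. (real k - m) / sqrt m)) A"
proof -
  have "emeasure (distr (measure_pmf (poisson_pmf m)) borel (\<lambda>k. (real k - m) / sqrt m)) A
      = emeasure (measure_pmf (poisson_pmf m)) ((\<lambda>k. (real k - m) / sqrt m) -` A)"
    using A by (subst emeasure_distr) auto
  also have "\<dots> = (\<integral>\<^sup>+k. indicator ((\<lambda>k. (real k - m) / sqrt m) -` A) k \<partial>measure_pmf (poisson_pmf m))"
    by (simp add: nn_integral_indicator[symmetric] del: nn_integral_indicator)
  also have "\<dots> = (\<integral>\<^sup>+k. ennreal (pmf (poisson_pmf m) k) * indicator ((\<lambda>k. (real k - m) / sqrt m) -` A) k \<partial>count_space UNIV)"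
    by (rule nn_integral_measure_pmf)
  also have "\<dots> = (\<Sum>k. ennreal (pmf (poisson_pmf m) k) * indicator ((\<lambda>k. (real k - m) / sqrt m) -` A) k)"
    by (rule nn_integral_count_space_nat)
  also have "\<dots> = H A m"
    unfolding H_def using m
    by (intro suminf_cong) (auto simp: qp_def indicator_def)
  finally show ?thesis by simp
qed

lemma H_lim:
  assumes A: "A \<in> sets borel" and fr: "measure std_normal_measure (frontier A) = 0"
  shows "((\<lambda>m. enn2real (H A m)) \<longlongrightarrow> measure std_normal_measure A) at_top"
proof -
  have "\<forall>\<^sub>F m in at_top. measure (distr (measure_pmf (poisson_pmf m)) borel (\<lambda>k. (real k - m) / sqrt m)) A = enn2real (H A m)"
    using eventually_gt_at_top[of 0]
  proof eventually_elim
    case (elim m)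
    show ?case using H_pmf[OF A elim] by (simp add: measure_def)
  qed
  from Lim_transform_eventually[OF poisson_clt[OF A fr] this] show ?thesis .
qed

lemma H_meas[measurable]:
  assumes [measurable]: "A \<in> sets borel"
  shows "H A \<in> borel_measurable borel"
proof -
  have q[measurable]: "(\<lambda>m. qp m j) \<in> borel_measurable borel" for j
    unfolding qp_def by measurable
  have i[measurable]: "(\<lambda>x. indicator A ((real j - x) / sqrt x) :: real) \<in> borel_measurable borel" for j
  proof -
    have f: "(\<lambda>x. (real j - x) / sqrt x) \<in> borel_measurable borel" by measurable
    have "(\<lambda>x. (real j - x) / sqrt x) -` A \<in> sets borel"
      using measurable_sets[OF f assms] by simp
    then have "indicator ((\<lambda>x. (real j - x) / sqrt x) -` A) \<in> (borel_measurable borel :: (real \<Rightarrow> real) set)"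
      by (rule borel_measurable_indicator)
    then show ?thesis by (simp add: indicator_def)
  qed
  show ?thesis unfolding H_def by measurable
qed


locale LP2 = LP M N1 L \<alpha> for M :: "'a measure" and N1 L \<alpha> +
  fixes lam :: "real \<Rightarrow> real"
  assumes lpos: "\<And>t. t \<ge> 0 \<Longrightarrow> lam t > 0"
    and lint: "\<And>t. t \<ge> 0 \<Longrightarrow> set_integrable lborel {0..t} lam"
    and ltop: "filterlim (\<lambda>t::real. LBINT \<tau>=0..t. lam \<tau>) at_top at_top"
begin

definition Lam :: "real \<Rightarrow> real" where "Lam t = (LBINT \<tau>=0..t. lam \<tau>)"
definition G where "G T = {\<omega>\<in>space M. \<exists>n::nat. T < L (real n) \<omega>}"
definition Zg where "Zg T \<omega> = Lam (max 0 (inverse_subordinator L T \<omega>))"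
definition Xf where "Xf T \<omega> = (real (N1 (Lam (inverse_subordinator L T \<omega>)) \<omega>) - Lam (inverse_subordinator L T \<omega>))
    / sqrt (Lam (inverse_subordinator L T \<omega>))"

lemma G_V[measurable]: "G T \<in> sets V"
proof -
  have m1: "{\<omega>\<in>space V. T < L r \<omega>} \<in> sets V" for r by measurable
  have "G T = (\<Union>n. {\<omega>\<in>space V. T < L (real n) \<omega>})" unfolding G_def by auto
  then show ?thesis using m1 by (simp add: sets.countable_UN)
qed

lemma G_M[measurable]: "G T \<in> sets M"
  using V_sub_M[OF G_V] .

lemma G_space: "G T \<subseteq> space M" unfolding G_def by auto

lemma Y_G: "\<omega> \<in> G T \<Longrightarrow> 0 \<le> inverse_subordinator L T \<omega>"
proof -
  assume "\<omega> \<in> G T"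
  then obtain n :: nat where "T < L (real n) \<omega>" unfolding G_def by auto
  then have ne: "{u. 0 \<le> u \<and> T < L u \<omega>} \<noteq> {}" by (intro notI) (drule equalityD1, auto simp: subset_iff)
  show ?thesis unfolding inverse_subordinator_def by (rule cInf_greatest[OF ne]) auto
qed

lemma Y_notG:
  assumes "\<omega> \<in> space M" "\<omega> \<notin> G T"
  shows "inverse_subordinator L T \<omega> = Inf {}"
proof -
  have "{u. 0 \<le> u \<and> T < L u \<omega>} = {}"
  proof (rule ccontr)
    assume "{u. 0 \<le> u \<and> T < L u \<omega>} \<noteq> {}"
    then obtain u where u: "0 \<le> u" "T < L u \<omega>" by auto
    have "L u \<omega> \<le> L (real (nat \<lceil>u\<rceil>)) \<omega>"
    proof (rule mono_onD[OF L_mono[OF assms(1)]])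
      show "u \<le> real (nat \<lceil>u\<rceil>)" using real_nat_ceiling_ge by blast
    qed (use u in auto)
    then have "T < L (real (nat \<lceil>u\<rceil>)) \<omega>" using u by linarith
    then show False using assms unfolding G_def by blast
  qed
  then show ?thesis unfolding inverse_subordinator_def by (simp only:)
qed

lemma Lam_mono': "mono (\<lambda>x. Lam (max 0 x))"
  unfolding Lam_def by (rule Lam_max_mono[OF lpos lint])

lemma Zg_V[measurable]: "Zg T \<in> borel_measurable V"
proof -
  have "(\<lambda>x. Lam (max 0 x)) \<in> borel_measurable borel" by (rule borel_measurable_mono[OF Lam_mono'])
  from measurable_compose[OF Y_meas this] show ?thesis unfolding Zg_def by (simp add: o_def)
qed

lemma Zg_M[measurable]: "Zg T \<in> borel_measurable M"
  by (rule meas_V_M[OF Zg_V])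

lemma Zg_nonneg: "0 \<le> Zg T \<omega>"
  unfolding Zg_def Lam_def using lpos lint by (intro Lam_nonneg) auto

lemma Zg_G: "\<omega> \<in> G T \<Longrightarrow> Zg T \<omega> = Lam (inverse_subordinator L T \<omega>)"
  unfolding Zg_def using Y_G by (simp add: max_def)

lemma notBad_G: "\<omega> \<in> space M \<Longrightarrow> \<omega> \<notin> Bad \<Longrightarrow> \<omega> \<in> G T"
  unfolding G_def using not_Bad_unbounded by auto

lemma Zg_inf:
  assumes "\<omega> \<in> space M" "\<omega> \<notin> Bad"
  shows "filterlim (\<lambda>T. Zg T \<omega>) at_top at_top"
proof -
  have unb: "\<And>T. \<exists>n::nat. T < L (real n) \<omega>" using not_Bad_unbounded[OF assms] .
  have Yi: "filterlim (\<lambda>T. inverse_subordinator L T \<omega>) at_top at_top"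
    unfolding inverse_subordinator_def by (rule Inf_to_infinity(1)[OF L_mono[OF assms(1)] unb])
  have "filterlim (\<lambda>T. Lam (inverse_subordinator L T \<omega>)) at_top at_top"
    unfolding Lam_def by (rule filterlim_compose[OF ltop Yi])
  moreover have "Zg T \<omega> = Lam (inverse_subordinator L T \<omega>)" for T
    using Zg_G notBad_G[OF assms] by simp
  ultimately show ?thesis by simp
qed

lemma main_eq:
  assumes A[measurable]: "A \<in> sets borel" and B: "B \<in> sets V"
  shows "emeasure M ({\<omega>\<in>space M. Xf T \<omega> \<in> A} \<inter> B \<inter> G T) = (\<integral>\<^sup>+\<omega>. indicator (B \<inter> G T) \<omega> * H A (Zg T \<omega>) \<partial>M)"
proof -
  define Z where "Z = Zg T"
  have ZV[measurable]: "Z \<in> borel_measurable V" unfolding Z_def by (rule Zg_V)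
  have ZM[measurable]: "Z \<in> borel_measurable M" unfolding Z_def by (rule Zg_M)
  have Z0: "\<And>\<omega>. \<omega> \<in> space M \<Longrightarrow> 0 \<le> Z \<omega>" unfolding Z_def by (rule Zg_nonneg)
  define C where "C j = B \<inter> G T \<inter> {\<omega>\<in>space M. (real j - Z \<omega>) / sqrt (Z \<omega>) \<in> A}" for j :: nat
  have CV: "C j \<in> sets V" for j
  proof -
    have f: "(\<lambda>\<omega>. (real j - Z \<omega>) / sqrt (Z \<omega>)) \<in> borel_measurable V" by measurable
    have "(\<lambda>\<omega>. (real j - Z \<omega>) / sqrt (Z \<omega>)) -` A \<inter> space V \<in> sets V"
      by (rule measurable_sets[OF f A])
    moreover have "{\<omega>\<in>space M. (real j - Z \<omega>) / sqrt (Z \<omega>) \<in> A} = (\<lambda>\<omega>. (real j - Z \<omega>) / sqrt (Z \<omega>)) -` A \<inter> space V"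
      by auto
    ultimately show ?thesis unfolding C_def using B G_V by auto
  qed
  have CM: "C j \<in> sets M" for j using V_sub_M[OF CV] .
  define E where "E j = {\<omega>\<in>space M. N1 (Z \<omega>) \<omega> = j}" for j :: nat
  have EM: "E j \<in> sets M" for j unfolding E_def by (rule N_at_set[OF ZM Z0])
  have un: "{\<omega>\<in>space M. Xf T \<omega> \<in> A} \<inter> B \<inter> G T = (\<Union>j. E j \<inter> C j)"
  proof -
    have "Xf T \<omega> = (real (N1 (Z \<omega>) \<omega>) - Z \<omega>) / sqrt (Z \<omega>)" if "\<omega> \<in> G T" for \<omega>
      unfolding Xf_def Z_def using Zg_G[OF that] by simp
    then show ?thesis unfolding E_def C_def using G_space by auto
  qed
  have disj: "disjoint_family (\<lambda>j. E j \<inter> C j)"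
    unfolding disjoint_family_on_def E_def by auto
  have "emeasure M ({\<omega>\<in>space M. Xf T \<omega> \<in> A} \<inter> B \<inter> G T) = (\<Sum>j. emeasure M (E j \<inter> C j))"
    unfolding un by (rule suminf_emeasure[symmetric]) (use EM CM disj in auto)
  also have "\<dots> = (\<Sum>j. \<integral>\<^sup>+\<omega>. ennreal (indicator (C j) \<omega> * qp (Z \<omega>) j) \<partial>M)"
    unfolding E_def by (intro suminf_cong key[OF ZV Z0 CV])
  also have "\<dots> = (\<integral>\<^sup>+\<omega>. (\<Sum>j. ennreal (indicator (C j) \<omega> * qp (Z \<omega>) j)) \<partial>M)"
  proof (rule nn_integral_suminf[symmetric])
    fix j
    have [measurable]: "C j \<in> sets M" by (rule CM)
    show "(\<lambda>\<omega>. ennreal (indicator (C j) \<omega> * qp (Z \<omega>) j)) \<in> borel_measurable M"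
      unfolding qp_def by measurable
  qed
  also have "\<dots> = (\<integral>\<^sup>+\<omega>. indicator (B \<inter> G T) \<omega> * H A (Z \<omega>) \<partial>M)"
  proof (rule nn_integral_cong)
    fix \<omega> assume \<omega>: "\<omega> \<in> space M"
    have "ennreal (indicator (C j) \<omega> * qp (Z \<omega>) j)
        = indicator (B \<inter> G T) \<omega> * ennreal (qp (Z \<omega>) j * indicator A ((real j - Z \<omega>) / sqrt (Z \<omega>)))" for j
      using \<omega> qp_nonneg[OF Z0[OF \<omega>]] by (auto simp: C_def indicator_def)
    then show "(\<Sum>j. ennreal (indicator (C j) \<omega> * qp (Z \<omega>) j)) = indicator (B \<inter> G T) \<omega> * H A (Z \<omega>)"
      unfolding H_def by simp
  qed
  finally show ?thesis unfolding Z_def .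
qed

end


context LP2 begin

lemma Xf_meas[measurable]: "Xf T \<in> borel_measurable M"
proof -
  define c0 where "c0 = Lam (Inf ({}::real set))"
  define Xg where "Xg \<omega> = (real (N1 (Zg T \<omega>) \<omega>) - Zg T \<omega>) / sqrt (Zg T \<omega>)" for \<omega>
  define Xc where "Xc \<omega> = (real (N1 c0 \<omega>) - c0) / sqrt c0" for \<omega>
  have [measurable]: "(\<lambda>\<omega>. real (N1 (Zg T \<omega>) \<omega>)) \<in> borel_measurable M"
    by (rule N_at_meas[OF Zg_M Zg_nonneg])
  have XgM[measurable]: "Xg \<in> borel_measurable M" unfolding Xg_def by measurable
  have XcM[measurable]: "Xc \<in> borel_measurable M" unfolding Xc_def by measurable
  have "(\<lambda>\<omega>. if \<omega> \<in> G T then Xg \<omega> else Xc \<omega>) \<in> borel_measurable M"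
    by (rule measurable_If_set[OF XgM XcM]) (use G_M in auto)
  moreover have "\<omega> \<in> space M \<Longrightarrow> Xf T \<omega> = (if \<omega> \<in> G T then Xg \<omega> else Xc \<omega>)" for \<omega>
    unfolding Xf_def Xg_def Xc_def c0_def using Zg_G Y_notG by auto
  ultimately show ?thesis by (subst measurable_cong) auto
qed

lemma final:
  assumes A[measurable]: "A \<in> sets borel" and fr: "measure std_normal_measure (frontier A) = 0"
    and B: "B \<in> gen_sigma M (inverse_subordinator L)"
  shows "((\<lambda>T. measure M ({\<omega>\<in>space M. Xf T \<omega> \<in> A} \<inter> B)) \<longlongrightarrow> measure std_normal_measure A * measure M B) at_top"
proof -
  have BV: "B \<in> sets V" using B gen_sigma_sub by auto
  have BM[measurable]: "B \<in> sets M" using V_sub_M[OF BV] .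
  define F where "F T \<omega> = indicator (B \<inter> G T) \<omega> * enn2real (H A (Zg T \<omega>))" for T \<omega>
  have FM[measurable]: "F T \<in> borel_measurable M" for T unfolding F_def by measurable
  have F_bd: "0 \<le> F T \<omega> \<and> F T \<omega> \<le> 1" for T \<omega>
  proof -
    have "enn2real (H A (Zg T \<omega>)) \<le> 1"
      using H_le1[OF Zg_nonneg[of T \<omega>], of A] by (simp add: enn2real_leI)
    then show ?thesis unfolding F_def by (auto simp: indicator_def)
  qed
  have meq: "measure M ({\<omega>\<in>space M. Xf T \<omega> \<in> A} \<inter> B) = integral\<^sup>L M (F T)" for T
  proof -
    define S1 where "S1 = {\<omega>\<in>space M. Xf T \<omega> \<in> A} \<inter> B"
    have S1M: "S1 \<in> sets M" unfolding S1_def by measurable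
    have nul: "space M - G T \<in> null_sets M"
      by (rule null_sets_subset[OF Bad_null]) (use notBad_G in auto)
    have "emeasure M S1 = emeasure M (S1 - (space M - G T))"
      by (rule emeasure_Diff_null_set[OF nul S1M, symmetric])
    also have "S1 - (space M - G T) = {\<omega>\<in>space M. Xf T \<omega> \<in> A} \<inter> B \<inter> G T"
      unfolding S1_def using G_space by auto
    also have "emeasure M \<dots> = (\<integral>\<^sup>+\<omega>. indicator (B \<inter> G T) \<omega> * H A (Zg T \<omega>) \<partial>M)"
      by (rule main_eq[OF A BV])
    also have "\<dots> = (\<integral>\<^sup>+\<omega>. ennreal (F T \<omega>) \<partial>M)"
    proof (rule nn_integral_cong)
      fix \<omega>
      have ne: "H A (Zg T \<omega>) \<noteq> \<top>"
        using H_le1[OF Zg_nonneg[of T \<omega>], of A] by (metis ennreal_one_neq_top top_unique)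
      have "H A (Zg T \<omega>) = ennreal (enn2real (H A (Zg T \<omega>)))"
        using ne by (simp add: ennreal_enn2real_if)
      then show "indicator (B \<inter> G T) \<omega> * H A (Zg T \<omega>) = ennreal (F T \<omega>)"
        unfolding F_def by (cases "\<omega> \<in> B \<inter> G T") simp_all
    qed
    also have "\<dots> = ennreal (integral\<^sup>L M (F T))"
      by (rule nn_integral_eq_integral) (auto intro!: integrable_const_bound[where B=1] simp: F_bd)
    finally have "emeasure M S1 = ennreal (integral\<^sup>L M (F T))" .
    then have "measure M S1 = integral\<^sup>L M (F T)"
      by (simp add: measure_def integral_nonneg_AE F_bd)
    then show ?thesis unfolding S1_def .
  qed
  have lim: "((\<lambda>T. integral\<^sup>L M (F T)) \<longlongrightarrow> (\<integral>\<omega>. indicator B \<omega> * measure std_normal_measure A \<partial>M)) at_top"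
  proof (rule integral_dominated_convergence_at_top[where w="\<lambda>_. 1"])
    show "AE \<omega> in M. ((\<lambda>T. F T \<omega>) \<longlongrightarrow> indicator B \<omega> * measure std_normal_measure A) at_top"
    proof (rule AE_I'[OF Bad_null])
      show "{\<omega> \<in> space M. \<not> ((\<lambda>T. F T \<omega>) \<longlongrightarrow> indicator B \<omega> * measure std_normal_measure A) at_top} \<subseteq> Bad"
      proof (intro subsetI, rule ccontr)
        fix \<omega> assume \<omega>: "\<omega> \<in> {\<omega> \<in> space M. \<not> ((\<lambda>T. F T \<omega>) \<longlongrightarrow> indicator B \<omega> * measure std_normal_measure A) at_top}"
          and nb: "\<omega> \<notin> Bad"
        have sp: "\<omega> \<in> space M" using \<omega> by auto
        have "((\<lambda>T. enn2real (H A (Zg T \<omega>))) \<longlongrightarrow> measure std_normal_measure A) at_top"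
          by (rule filterlim_compose[OF H_lim[OF A fr] Zg_inf[OF sp nb]])
        then have "((\<lambda>T. indicator B \<omega> * enn2real (H A (Zg T \<omega>))) \<longlongrightarrow> indicator B \<omega> * measure std_normal_measure A) at_top"
          by (intro tendsto_mult tendsto_const)
        moreover have "F T \<omega> = indicator B \<omega> * enn2real (H A (Zg T \<omega>))" for T
          unfolding F_def using notBad_G[OF sp nb] by (auto simp: indicator_def)
        ultimately show False using \<omega> by simp
      qed
    qed
    show "\<forall>\<^sub>F T in at_top. AE \<omega> in M. norm (F T \<omega>) \<le> 1"
      using F_bd by (auto intro!: always_eventually AE_I2)
  qed auto
  have "(\<integral>\<omega>. indicator B \<omega> * measure std_normal_measure A \<partial>M) = measure std_normal_measure A * measure M B"
    using BM by simp
  with lim meq show ?thesis by (simp add: mult.commute)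
qed

end

theorem mainTheorem2:
  fixes M :: "'a measure" and N1 :: "real \<Rightarrow> 'a \<Rightarrow> nat" and L :: "real \<Rightarrow> 'a \<Rightarrow> real"
    and lam :: "real \<Rightarrow> real" and \<alpha> :: real
  assumes "prob_space M"
    and "std_poisson_process M N1"
    and "\<And>t. t \<ge> 0 \<Longrightarrow> lam t > 0"
    and "\<And>t. t \<ge> 0 \<Longrightarrow> set_integrable lborel {0..t} lam"
    and "filterlim (\<lambda>t::real. LBINT \<tau>=0..t. lam \<tau>) at_top at_top"
    and "0 < \<alpha>" and "\<alpha> < 1"
    and "stable_subordinator M \<alpha> L"
    and "prob_space.indep_var M
           (PiM UNIV (\<lambda>_::real. (borel::real measure))) (\<lambda>\<omega> t. real (N1 t \<omega>))
           (PiM UNIV (\<lambda>_::real. (borel::real measure))) (\<lambda>\<omega> t. L t \<omega>)"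
  shows "\<forall>B \<in> gen_sigma M (inverse_subordinator L).
           \<forall>A \<in> sets borel. measure std_normal_measure (frontier A) = 0 \<longrightarrow>
             ((\<lambda>T. measure M ({\<omega> \<in> space M.
                  (let \<Lambda> = (\<lambda>t::real. LBINT \<tau>=0..t. lam \<tau>); y = inverse_subordinator L T \<omega> in
                    (real (N1 (\<Lambda> y) \<omega>) - \<Lambda> y) / sqrt (\<Lambda> y)) \<in> A} \<inter> B))
              \<longlongrightarrow> measure std_normal_measure A * measure M B) at_top"
proof -
  interpret LP2 M N1 L \<alpha> lam
    by (intro LP2.intro LP.intro LP2_axioms.intro) (fact assms)+
  show ?thesis
  proof (intro ballI impI)
    fix B A
    assume B: "B \<in> gen_sigma M (inverse_subordinator L)" and A: "A \<in> sets borel"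
      and fr: "measure std_normal_measure (frontier A) = 0"
    show "((\<lambda>T. measure M ({\<omega> \<in> space M.
                  (let \<Lambda> = (\<lambda>t::real. LBINT \<tau>=0..t. lam \<tau>); y = inverse_subordinator L T \<omega> in
                    (real (N1 (\<Lambda> y) \<omega>) - \<Lambda> y) / sqrt (\<Lambda> y)) \<in> A} \<inter> B))
              \<longlongrightarrow> measure std_normal_measure A * measure M B) at_top"
      using final[OF A fr B] unfolding Xf_def Lam_def Let_def .
  qed
qed

end
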